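(* Assume $R_\phi(\mathbf{w})$ has a unique minimizer $\mathbf{w}_{\mathrm{sup}}$ and that $\phi$ is decreasing, i.e. $\phi(a)\ge\phi(b)$ whenever $a\le b$. Then there is no $\mathbf{w}_{\mathrm{semi}}\in\mathbb{R}^d$ that satisfies both of the following: (i) $\max_{\mathbf{q}\in\{0,1\}^U} D_\phi(\mathbf{w}_{\mathrm{semi}},\mathbf{q})\le 0$; (ii) there exists $\mathbf{q}^\ast\in\{0,1\}^U$ with $D_\phi(\mathbf{w}_{\mathrm{semi}},\mathbf{q}^\ast)<0$.
   Context: Fix integers $L,U,d\ge 1$. Let $\mathbf{X}\in\mathbb{R}^{L\times d}$ be a matrix whose rows $\mathbf{x}_1^\top,\dots,\mathbf{x}_L^\top$ are the labeled objects, with labels $\mathbf{y}\in\{-1,+1\}^L$. Let $\mathbf{X}_{\mathrm{u}}\in\mathbb{R}^{U\times d}$ be a matrix whose rows $\mathbf{x}_{\mathrm{u},1}^\top,\dots,\mathbf{x}_{\mathrm{u},U}^\top$ are the unlabeled objects. Let $\phi:\mathbb{R}\to\mathbb{R}$ be a loss function, $\Omega:\mathbb{R}^d\to\mathbb{R}$ a convex function and $\lambda\ge 0$. The supervised risk is $R_\phi(\mathbf{w})=\sum_{i=1}^L\phi(y_i\mathbf{x}_i^\top\mathbf{w})+\lambda\Omega(\mathbf{w})$. For responsibilities $\mathbf{q}\in[0,1]^U$ the semi-supervised risk is $R^{\mathrm{semi}}_\phi(\mathbf{w},\mathbf{q})=R_\phi(\mathbf{w})+\sum_{j=1}^U\big[q_j\phi(\mathbf{x}_{\mathrm{u},j}^\top\mathbf{w})+(1-q_j)\phi(-\mathbf{x}_{\mathrm{u},j}^\top\mathbf{w})\big]$.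 Given the minimizer $\mathbf{w}_{\mathrm{sup}}$ of $R_\phi$, define $D_\phi(\mathbf{w},\mathbf{q})=R^{\mathrm{semi}}_\phi(\mathbf{w},\mathbf{q})-R^{\mathrm{semi}}_\phi(\mathbf{w}_{\mathrm{sup}},\mathbf{q})$. *)

theory Defs
  imports "HOL-Analysis.Analysis"
begin

definition sup_risk ::
  "(real \<Rightarrow> real) \<Rightarrow> (real^'d \<Rightarrow> real) \<Rightarrow> real \<Rightarrow>
   ('l::finite \<Rightarrow> real^'d) \<Rightarrow> ('l \<Rightarrow> real) \<Rightarrow> real^'d \<Rightarrow> real" where
  "sup_risk \<phi> \<Omega> lam X y w = (\<Sum>i\<in>UNIV. \<phi> (y i * (X i \<bullet> w))) + lam * \<Omega> w"

definition semi_risk ::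
  "(real \<Rightarrow> real) \<Rightarrow> (real^'d \<Rightarrow> real) \<Rightarrow> real \<Rightarrow>
   ('l::finite \<Rightarrow> real^'d) \<Rightarrow> ('l \<Rightarrow> real) \<Rightarrow> ('u::finite \<Rightarrow> real^'d) \<Rightarrow>
   real^'d \<Rightarrow> ('u \<Rightarrow> real) \<Rightarrow> real" where
  "semi_risk \<phi> \<Omega> lam X y Xu w q = sup_risk \<phi> \<Omega> lam X y w +
     (\<Sum>j\<in>UNIV. q j * \<phi> (Xu j \<bullet> w) + (1 - q j) * \<phi> (- (Xu j \<bullet> w)))"

definition D_risk ::
  "(real \<Rightarrow> real) \<Rightarrow> (real^'d \<Rightarrow> real) \<Rightarrow> real \<Rightarrow>
   ('l::finite \<Rightarrow> real^'d) \<Rightarrow> ('l \<Rightarrow> real) \<Rightarrow> ('u::finite \<Rightarrow> real^'d) \<Rightarrow>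
   real^'d \<Rightarrow> real^'d \<Rightarrow> ('u \<Rightarrow> real) \<Rightarrow> real" where
  "D_risk \<phi> \<Omega> lam X y Xu wsup w q =
     semi_risk \<phi> \<Omega> lam X y Xu w q - semi_risk \<phi> \<Omega> lam X y Xu wsup q"

end

theory Submission
  imports Defs
begin

theorem theorem1:
  fixes \<phi> :: "real \<Rightarrow> real" and \<Omega> :: "real^'d \<Rightarrow> real" and lam :: real
    and X :: "'l::finite \<Rightarrow> real^'d" and y :: "'l \<Rightarrow> real"
    and Xu :: "'u::finite \<Rightarrow> real^'d" and wsup :: "real^'d"
  assumes y_sign: "\<forall>i. y i \<in> {-1, 1}"
    and Omega_convex: "convex_on UNIV \<Omega>"
    and lambda_nonneg: "lam \<ge> 0"
    and wsup_min: "\<forall>w. sup_risk \<phi> \<Omega> lam X y wsup \<le> sup_risk \<phi> \<Omega> lam X y w"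
    and wsup_unique: "\<forall>w. sup_risk \<phi> \<Omega> lam X y w \<le> sup_risk \<phi> \<Omega> lam X y wsup \<longrightarrow> w = wsup"
    and phi_decr: "\<forall>a b. a \<le> b \<longrightarrow> \<phi> a \<ge> \<phi> b"
  shows "\<not> (\<exists>wsemi :: real^'d.
            (\<forall>q. (\<forall>j. q j \<in> {0, 1}) \<longrightarrow> D_risk \<phi> \<Omega> lam X y Xu wsup wsemi q \<le> 0) \<and>
            (\<exists>q. (\<forall>j. q j \<in> {0, 1}) \<and> D_risk \<phi> \<Omega> lam X y Xu wsup wsemi q < 0))"
proof
  assume "\<exists>wsemi :: real^'d.
            (\<forall>q. (\<forall>j. q j \<in> {0, 1}) \<longrightarrow> D_risk \<phi> \<Omega> lam X y Xu wsup wsemi q \<le> 0) \<and>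
            (\<exists>q. (\<forall>j. q j \<in> {0, 1}) \<and> D_risk \<phi> \<Omega> lam X y Xu wsup wsemi q < 0)"
  then obtain w where i: "\<forall>q. (\<forall>j. q j \<in> {0, 1}) \<longrightarrow> D_risk \<phi> \<Omega> lam X y Xu wsup w q \<le> 0"
    and ii: "\<exists>q. (\<forall>j. q j \<in> {0, 1}) \<and> D_risk \<phi> \<Omega> lam X y Xu wsup w q < 0" by blast
  show False
  proof (cases "w = wsup")
    case True
    then show False using ii unfolding D_risk_def by auto
  next
    case False
    have gt: "sup_risk \<phi> \<Omega> lam X y w > sup_risk \<phi> \<Omega> lam X y wsup"
      using wsup_unique False by (meson not_le)
    define q where "q j = (if Xu j \<bullet> w \<le> Xu j \<bullet> wsup then 1 else (0::real))" for j
    have q01: "\<forall>j. q j \<in> {0, 1}" by (simp add: q_def)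
    have trm: "q j * \<phi> (Xu j \<bullet> w) + (1 - q j) * \<phi> (- (Xu j \<bullet> w))
        \<ge> q j * \<phi> (Xu j \<bullet> wsup) + (1 - q j) * \<phi> (- (Xu j \<bullet> wsup))" for j
    proof (cases "Xu j \<bullet> w \<le> Xu j \<bullet> wsup")
      case True
      then have "\<phi> (Xu j \<bullet> w) \<ge> \<phi> (Xu j \<bullet> wsup)" using phi_decr by blast
      then show ?thesis using True by (simp add: q_def)
    next
      case False
      then have "- (Xu j \<bullet> w) \<le> - (Xu j \<bullet> wsup)" by simp
      then have "\<phi> (- (Xu j \<bullet> w)) \<ge> \<phi> (- (Xu j \<bullet> wsup))" using phi_decr by blast
      then show ?thesis using False by (simp add: q_def)
    qed
    have "(\<Sum>j\<in>UNIV. q j * \<phi> (Xu j \<bullet> w) + (1 - q j) * \<phi> (- (Xu j \<bullet> w)))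
        \<ge> (\<Sum>j\<in>UNIV. q j * \<phi> (Xu j \<bullet> wsup) + (1 - q j) * \<phi> (- (Xu j \<bullet> wsup)))"
      by (rule sum_mono) (rule trm)
    with gt have "D_risk \<phi> \<Omega> lam X y Xu wsup w q > 0"
      unfolding D_risk_def semi_risk_def by linarith
    moreover have "D_risk \<phi> \<Omega> lam X y Xu wsup w q \<le> 0" using i q01 by blast
    ultimately show False by linarith
  qed
qed

end
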